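(* Let $P$ be the uniform distribution on $[a,b]\subset\mathbb{R}$ and let $c,d$ satisfy $a<c<d<b$. For $n\in\mathbb{N}$, $n\geq2$, let $\alpha_n$ be a conditional optimal set of $n$-points for $P$ with respect to $\beta=\{c,d\}$ such that $\alpha_n$ contains $k$ elements of $[a,c]$, $\ell$ elements of $[c,d]$ and $m$ elements of $[d,b]$, where $k,\ell,m\in\mathbb{N}$, $k,m\geq1$, $\ell\geq2$. Then $k+\ell+m=n+2$, \[\alpha_n\cap[a,c]=\Big\{a+\tfrac{(2j-1)(c-a)}{2k-1}:1\leq j\leq k\Big\},\quad \alpha_n\cap[c,d]=\Big\{c+\tfrac{j-1}{\ell-1}(d-c):1\leq j\leq\ell\Big\},\] \[\alpha_n\cap[d,b]=\Big\{d+\tfrac{2(j-1)(b-d)}{2m-1}:1\leq j\leq m\Big\},\] and the conditional quantization error is \[V_n=\frac1{3(b-a)}\Big(\frac{(c-a)^3}{(2k-1)^2}+\frac14\,\frac{(d-c)^3}{(\ell-1)^2}+\frac{(b-d)^3}{(2m-1)^2}\Big).\]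
   Context: Conditional quantization on $\mathbb{R}$: for a Borel probability measure $P$ on $\mathbb{R}$ and a finite set $\beta\subset\mathbb{R}$ with $\mathrm{card}(\beta)=r$, for $n\geq r$ the $n$th conditional quantization error is $V_n=\inf\{\int\min_{a'\in\alpha\cup\beta}(x-a')^2\,dP(x):\alpha\subset\mathbb{R},\ \mathrm{card}(\alpha)\leq n-r\}$. A set $\alpha\cup\beta$ attaining this infimum, such that each $b'\in\beta$ has a Voronoi region (points at least as close to $b'$ as to any other point of the set) of positive $P$-measure, is a conditional optimal set of $n$-points with respect to $\beta$; it contains $\beta$. *)

theory Defs
  imports "HOL-Probability.Probability"
begin

definition uniform_interval :: "real \<Rightarrow> real \<Rightarrow> real measure" where
  "uniform_interval a b = uniform_measure lborel {a..b}"

definition cond_distortion :: "real measure \<Rightarrow> real set \<Rightarrow> real set \<Rightarrow> real" where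
  "cond_distortion P \<beta> \<alpha> = (\<integral>x. Min ((\<lambda>p. (x - p)\<^sup>2) ` (\<alpha> \<union> \<beta>)) \<partial>P)"

definition cond_qerror :: "real measure \<Rightarrow> real set \<Rightarrow> nat \<Rightarrow> real" where
  "cond_qerror P \<beta> n =
     (INF \<alpha> \<in> {\<alpha>. finite \<alpha> \<and> card \<alpha> \<le> n - card \<beta>}. cond_distortion P \<beta> \<alpha>)"

definition voronoi :: "real set \<Rightarrow> real \<Rightarrow> real set" where
  "voronoi S p = {x. \<forall>q\<in>S. \<bar>x - p\<bar> \<le> \<bar>x - q\<bar>}"

definition cond_optimal_set :: "real measure \<Rightarrow> real set \<Rightarrow> nat \<Rightarrow> real set \<Rightarrow> bool" where
  "cond_optimal_set P \<beta> n \<gamma> \<longleftrightarrow>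
     card \<beta> \<le> n \<and>
     (\<exists>\<alpha>. finite \<alpha> \<and> card \<alpha> \<le> n - card \<beta> \<and> \<gamma> = \<alpha> \<union> \<beta> \<and>
          cond_distortion P \<beta> \<alpha> = cond_qerror P \<beta> n) \<and>
     (\<forall>p\<in>\<beta>. measure P (voronoi \<gamma> p) > 0)"

end

theory Submission
  imports Defs
begin


definition fS :: "real set \<Rightarrow> real \<Rightarrow> real" where
  "fS S x = Min ((\<lambda>p. (x - p)\<^sup>2) ` S)"

lemma fS_cont: "finite S \<Longrightarrow> S \<noteq> {} \<Longrightarrow> continuous_on A (fS S)"
proof (induction S rule: finite_ne_induct)
  case (singleton x)
  then show ?case unfolding fS_def by (auto intro!: continuous_intros)
next
  case (insert x F)
  have "fS (insert x F) = (\<lambda>y. min ((y - x)\<^sup>2) (fS F y))"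
    using insert by (auto simp: fS_def fun_eq_iff)
  then show ?case using insert by (auto intro!: continuous_intros)
qed

lemma fS_nonneg: "finite S \<Longrightarrow> S \<noteq> {} \<Longrightarrow> fS S x \<ge> 0"
  unfolding fS_def by (subst Min_ge_iff) auto

lemma fS_left:
  assumes "finite S" "c \<in> S" "x \<le> c"
  shows "fS S x = fS (S \<inter> {..c}) x"
proof -
  have ne: "S \<inter> {..c} \<noteq> {}" using assms by auto
  have "fS S x \<le> fS (S \<inter> {..c}) x" unfolding fS_def
    by (rule Min_antimono) (use assms ne in auto)
  moreover have "fS (S \<inter> {..c}) x \<le> fS S x"
  proof -
    have "Min ((\<lambda>p. (x - p)\<^sup>2) ` S) \<in> (\<lambda>p. (x - p)\<^sup>2) ` S"
      by (rule Min_in) (use assms in auto)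
    then obtain p where p: "p \<in> S" "fS S x = (x - p)\<^sup>2"
      unfolding fS_def by auto
    show ?thesis
    proof (cases "p \<le> c")
      case True
      then show ?thesis using p assms unfolding fS_def by (intro Min_le) auto
    next
      case False
      have "fS (S \<inter> {..c}) x \<le> (x - c)\<^sup>2" unfolding fS_def using assms by (intro Min_le) auto
      also have "\<dots> \<le> (x - p)\<^sup>2" using False assms by (subst abs_le_square_iff[symmetric]) arith
      finally show ?thesis using p by simp
    qed
  qed
  ultimately show ?thesis by simp
qed

lemma fS_right:
  assumes "finite S" "d \<in> S" "d \<le> x"
  shows "fS S x = fS (S \<inter> {d..}) x"
proof -
  have ne: "S \<inter> {d..} \<noteq> {}" using assms by auto
  have "fS S x \<le> fS (S \<inter> {d..}) x" unfolding fS_def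
    by (rule Min_antimono) (use assms ne in auto)
  moreover have "fS (S \<inter> {d..}) x \<le> fS S x"
  proof -
    have "Min ((\<lambda>p. (x - p)\<^sup>2) ` S) \<in> (\<lambda>p. (x - p)\<^sup>2) ` S"
      by (rule Min_in) (use assms in auto)
    then obtain p where p: "p \<in> S" "fS S x = (x - p)\<^sup>2"
      unfolding fS_def by auto
    show ?thesis
    proof (cases "d \<le> p")
      case True
      then show ?thesis using p assms unfolding fS_def by (intro Min_le) auto
    next
      case False
      have "fS (S \<inter> {d..}) x \<le> (x - d)\<^sup>2" unfolding fS_def using assms by (intro Min_le) auto
      also have "\<dots> \<le> (x - p)\<^sup>2" using False assms by (subst abs_le_square_iff[symmetric]) arith
      finally show ?thesis using p by simp
    qed
  qed
  ultimately show ?thesis by simp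
qed

lemma int_sq:
  assumes "u \<le> v"
  shows "integral {u..v} (\<lambda>x::real. (x - t)\<^sup>2) = ((v - t)^3 - (u - t)^3) / 3"
proof -
  have "((\<lambda>x::real. (x - t)\<^sup>2) has_integral ((\<lambda>x. (x - t)^3/3) v - (\<lambda>x. (x - t)^3/3) u)) {u..v}"
  proof (rule fundamental_theorem_of_calculus[OF assms])
    fix x assume "x \<in> {u..v}"
    have "((\<lambda>x. (x - t)^3/3) has_real_derivative (x - t)\<^sup>2) (at x within {u..v})"
      by (auto intro!: derivative_eq_intros simp: power2_eq_square)
    then show "((\<lambda>x. (x - t)^3/3) has_vector_derivative (x - t)\<^sup>2) (at x within {u..v})"
      by (simp add: has_real_derivative_iff_has_vector_derivative)
  qed
  then show ?thesis by (simp add: integral_unique diff_divide_distrib)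
qed

lemma int_two:
  assumes "w \<le> v"
  shows "integral {w..v} (fS {w, v}) = (v - w)^3 / 12"
proof -
  define mid where "mid = (w + v) / 2"
  have m: "w \<le> mid" "mid \<le> v" using assms by (auto simp: mid_def)
  have int: "fS {w,v} integrable_on {w..v}"
    by (rule integrable_continuous_interval, rule fS_cont) auto
  have "integral {w..v} (fS {w, v}) = integral {w..mid} (fS {w, v}) + integral {mid..v} (fS {w, v})"
    using Henstock_Kurzweil_Integration.integral_combine[OF m int] by simp
  also have "integral {w..mid} (fS {w, v}) = integral {w..mid} (\<lambda>x. (x - w)\<^sup>2)"
  proof (rule integral_cong)
    fix x assume "x \<in> {w..mid}"
    then have "(x - w)\<^sup>2 \<le> (x - v)\<^sup>2" using assms unfolding mid_def
      by (subst abs_le_square_iff[symmetric]) auto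
    then show "fS {w, v} x = (x - w)\<^sup>2" by (simp add: fS_def min_def)
  qed
  also have "integral {mid..v} (fS {w, v}) = integral {mid..v} (\<lambda>x. (x - v)\<^sup>2)"
  proof (rule integral_cong)
    fix x assume "x \<in> {mid..v}"
    then have "(x - v)\<^sup>2 \<le> (x - w)\<^sup>2" using assms unfolding mid_def
      by (subst abs_le_square_iff[symmetric]) auto
    then show "fS {w, v} x = (x - v)\<^sup>2" by (simp add: fS_def min_def)
  qed
  finally show ?thesis using m by (simp add: int_sq mid_def field_simps) (simp add: algebra_simps power3_eq_cube)
qed

lemma key_ineq:
  fixes J x y :: real
  assumes "J > 0" "x \<ge> 0" "y \<ge> 0"
  shows "(x + y)^3 / (J + 1)\<^sup>2 \<le> x^3 / J\<^sup>2 + y^3"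
    and "(x + y)^3 / (J + 1)\<^sup>2 = x^3 / J\<^sup>2 + y^3 \<Longrightarrow> x = J * y"
proof -
  have P: "(J+1)\<^sup>2 * x^3 + J\<^sup>2*(J+1)\<^sup>2 * y^3 - J\<^sup>2 * (x+y)^3
      = (x - J*y)\<^sup>2 * ((2*J+1)*x + (J\<^sup>2+2*J)*y)"
    by (simp add: algebra_simps power2_eq_square power3_eq_cube)
  have E: "J\<^sup>2 * (J+1)\<^sup>2 * (x^3 / J\<^sup>2 + y^3 - (x + y)^3 / (J + 1)\<^sup>2)
      = (J+1)\<^sup>2 * x^3 + J\<^sup>2*(J+1)\<^sup>2 * y^3 - J\<^sup>2 * (x+y)^3"
    using assms by (simp add: field_simps)
  note E = E[unfolded P]
  have pos: "(x - J*y)\<^sup>2 * ((2*J+1)*x + (J\<^sup>2+2*J)*y) \<ge> 0"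
    using assms by (intro mult_nonneg_nonneg) auto
  have JJ: "J\<^sup>2 * (J+1)\<^sup>2 > 0" using assms by auto
  show "(x + y)^3 / (J + 1)\<^sup>2 \<le> x^3 / J\<^sup>2 + y^3"
    using E pos JJ by (smt (verit) zero_le_mult_iff)
  assume eq: "(x + y)^3 / (J + 1)\<^sup>2 = x^3 / J\<^sup>2 + y^3"
  then have "(x - J*y)\<^sup>2 * ((2*J+1)*x + (J\<^sup>2+2*J)*y) = 0" using E by simp
  then have "(x - J*y)\<^sup>2 = 0 \<or> (2*J+1)*x + (J\<^sup>2+2*J)*y = 0" by simp
  then show "x = J * y"
  proof
    assume "(2*J+1)*x + (J\<^sup>2+2*J)*y = 0"
    moreover have "(2*J+1)*x \<ge> 0" "(J\<^sup>2+2*J)*y \<ge> 0" using assms by auto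
    ultimately have "(2*J+1)*x = 0" "(J\<^sup>2+2*J)*y = 0" by linarith+
    then show ?thesis using assms by (simp add: power2_eq_square) (smt (verit) mult_pos_pos)
  qed simp
qed

lemma int_split:
  assumes "finite T" "T \<noteq> {}" "u \<le> w" "w \<le> v"
  shows "integral {u..v} (fS T) = integral {u..w} (fS T) + integral {w..v} (fS T)"
proof -
  have int: "fS T integrable_on {u..v}"
    by (rule integrable_continuous_interval, rule fS_cont) (use assms in auto)
  show ?thesis using Henstock_Kurzweil_Integration.integral_combine[OF assms(3,4) int] by simp
qed

lemma cube_aux: "(A::real) \<noteq> 0 \<Longrightarrow> (A * h)^3 / (12 * A\<^sup>2) = A * h^3 / 12"
  by (simp add: field_simps power2_eq_square power3_eq_cube)

definition id2 :: "real \<Rightarrow> real \<Rightarrow> nat \<Rightarrow> real set" where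
  "id2 u v j = (\<lambda>i. u + real i * (v - u) / real j) ` {..j}"

lemma two_sided:
  assumes "1 \<le> j" "finite T" "T \<subseteq> {u..v}" "u \<in> T" "v \<in> T" "card T = Suc j" "u < v"
  shows "integral {u..v} (fS T) \<ge> (v - u)^3 / (12 * (real j)\<^sup>2) \<and>
     (integral {u..v} (fS T) = (v - u)^3 / (12 * (real j)\<^sup>2) \<longleftrightarrow> T = id2 u v j)"
  using assms
proof (induction j arbitrary: v T)
  case 0
  then show ?case by simp
next
  case (Suc j)
  show ?case
  proof (cases "j = 0")
    case True
    have "{u, v} \<subseteq> T" using Suc by auto
    moreover have "card {u, v} = card T" using Suc True by auto
    ultimately have T: "T = {u, v}" using Suc by (metis card_subset_eq)
    have "id2 u v (Suc j) = {u, v}" using True by (auto simp: id2_def atMost_Suc)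
    then show ?thesis using T True Suc.prems int_two[of u v] by simp
  next
    case False
    hence j1: "1 \<le> j" by simp
    define T0 where "T0 = T - {v}"
    have fT0: "finite T0" using Suc by (simp add: T0_def)
    have uT0: "u \<in> T0" using Suc by (auto simp: T0_def)
    hence neT0: "T0 \<noteq> {}" by auto
    define w where "w = Max T0"
    have wT0: "w \<in> T0" unfolding w_def using fT0 neT0 by (rule Max_in)
    have wT: "w \<in> T" "w \<noteq> v" using wT0 by (auto simp: T0_def)
    have wv: "w < v" using wT Suc.prems by auto
    have cT0: "card T0 = Suc j" using Suc.prems by (simp add: T0_def)
    have T0sub: "T0 \<subseteq> {u..w}"
    proof
      fix z assume z: "z \<in> T0"
      then have "u \<le> z" using Suc.prems by (auto simp: T0_def)
      moreover have "z \<le> w" unfolding w_def using fT0 z by simp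
      ultimately show "z \<in> {u..w}" by simp
    qed
    have uw: "u < w"
    proof (rule ccontr)
      assume "\<not> u < w"
      then have "T0 \<subseteq> {u}" using T0sub by auto
      then have "card T0 \<le> 1" by (metis card.empty card.insert empty_iff finite.intros(1) insert_subset card_mono finite_insert le_zero_eq One_nat_def subset_singletonD order_refl)
      then show False using cT0 j1 by simp
    qed
    have TL: "T \<inter> {..w} = T0"
      using wv fT0 unfolding T0_def w_def by auto
    have TR: "T \<inter> {w..} = {w, v}"
    proof
      show "T \<inter> {w..} \<subseteq> {w, v}"
      proof
        fix x assume x: "x \<in> T \<inter> {w..}"
        show "x \<in> {w, v}"
        proof (cases "x = v")
          case False
          then have "x \<in> T0" using x by (auto simp: T0_def)
          then have "x \<le> w" unfolding w_def using fT0 by simp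
          then show ?thesis using x by auto
        qed simp
      qed
      show "{w, v} \<subseteq> T \<inter> {w..}" using wT wv Suc.prems by auto
    qed
    have I: "integral {u..v} (fS T) = integral {u..w} (fS T0) + (v - w)^3 / 12"
    proof -
      have "integral {u..v} (fS T) = integral {u..w} (fS T) + integral {w..v} (fS T)"
        by (rule int_split) (use Suc.prems uw wv in auto)
      also have "integral {u..w} (fS T) = integral {u..w} (fS T0)"
        by (rule integral_cong) (use fS_left[of T w] Suc.prems wT TL in auto)
      also have "integral {w..v} (fS T) = integral {w..v} (fS {w, v})"
        by (rule integral_cong) (use fS_right[of T w] Suc.prems wT TR in auto)
      also have "\<dots> = (v - w)^3 / 12" using wv by (simp add: int_two)
      finally show ?thesis .
    qed
    have IH: "integral {u..w} (fS T0) \<ge> (w - u)^3 / (12 * (real j)\<^sup>2) \<and>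
      (integral {u..w} (fS T0) = (w - u)^3 / (12 * (real j)\<^sup>2) \<longleftrightarrow> T0 = id2 u w j)"
      by (rule Suc.IH) (use j1 fT0 T0sub uT0 wT0 cT0 uw in auto)
    define x where "x = w - u"
    define y where "y = v - w"
    have xy: "x > 0" "y > 0" "v - u = x + y" using uw wv by (auto simp: x_def y_def)
    have J: "real j > 0" using j1 by simp
    have RS: "real (Suc j) = real j + 1" by simp
    note K = key_ineq[OF J, of x y]
    have ge: "integral {u..v} (fS T) \<ge> (v - u)^3 / (12 * (real (Suc j))\<^sup>2)"
    proof -
      have "(v - u)^3 / (12 * (real (Suc j))\<^sup>2) = ((x + y)^3 / (real j + 1)\<^sup>2) / 12"
        using xy RS by simp
      also have "\<dots> \<le> (x^3 / (real j)\<^sup>2 + y^3) / 12" using K xy by simp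
      also have "\<dots> \<le> integral {u..w} (fS T0) + (v - w)^3 / 12"
        using IH unfolding x_def y_def by (simp add: add_divide_distrib)
      finally show ?thesis using I by simp
    qed
    moreover have "integral {u..v} (fS T) = (v - u)^3 / (12 * (real (Suc j))\<^sup>2) \<longleftrightarrow> T = id2 u v (Suc j)"
    proof
      assume eq: "integral {u..v} (fS T) = (v - u)^3 / (12 * (real (Suc j))\<^sup>2)"
      have A: "(v - u)^3 / (12 * (real (Suc j))\<^sup>2) = ((x + y)^3 / (real j + 1)\<^sup>2) / 12"
        using xy RS by simp
      have B: "(x^3 / (real j)\<^sup>2 + y^3) / 12 = (w - u)^3 / (12 * (real j)\<^sup>2) + (v - w)^3 / 12"
        unfolding x_def y_def by (simp add: add_divide_distrib)
      have K1: "(x + y)^3 / (real j + 1)\<^sup>2 \<le> x^3 / (real j)\<^sup>2 + y^3" using K(1) xy by simp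
      have IH1: "integral {u..w} (fS T0) \<ge> (w - u)^3 / (12 * (real j)\<^sup>2)" using IH by simp
      have K1': "(x + y)^3 / (real j + 1)\<^sup>2 / 12 \<le> (x^3 / (real j)\<^sup>2 + y^3) / 12"
        using K1 by (simp add: divide_right_mono)
      have e1: "integral {u..w} (fS T0) = (w - u)^3 / (12 * (real j)\<^sup>2)"
        using eq I A B K1' IH1 by linarith
      have e2': "(x + y)^3 / (real j + 1)\<^sup>2 / 12 = (x^3 / (real j)\<^sup>2 + y^3) / 12"
        using eq I A B K1' IH1 by linarith
      have e2: "(x + y)^3 / (real j + 1)\<^sup>2 = x^3 / (real j)\<^sup>2 + y^3"
        using e2' by simp
      have xJ: "x = real j * y" using K(2)[OF _ _ e2] xy by simp
      have T0id: "T0 = id2 u w j" using IH e1 by simp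
      have h: "(w - u) / real j = (v - u) / real (Suc j)"
        using xJ xy J RS unfolding x_def by (simp add: field_simps)
      have T0': "T0 = (\<lambda>i. u + real i * (v - u) / real (Suc j)) ` {..j}"
        unfolding T0id id2_def
      proof (rule image_cong)
        fix i :: nat
        have "u + real i * (w - u) / real j = u + real i * ((w - u) / real j)" by simp
        also have "\<dots> = u + real i * (v - u) / real (Suc j)" unfolding h by simp
        finally show "u + real i * (w - u) / real j = u + real i * (v - u) / real (Suc j)" .
      qed simp
      have "T = insert v T0" using Suc.prems by (auto simp: T0_def)
      also have "\<dots> = id2 u v (Suc j)"
        unfolding T0' id2_def atMost_Suc image_insert by simp
      finally show "T = id2 u v (Suc j)" .
    next
      assume Tid: "T = id2 u v (Suc j)"
      define h where "h = (v - u) / real (Suc j)"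
      have hpos: "h > 0" using Suc.prems by (simp add: h_def)
      define g where "g = (\<lambda>i::nat. u + real i * h)"
      have Tg: "T = insert v (g ` {..j})"
        using Tid unfolding id2_def g_def h_def atMost_Suc image_insert by simp
      have vng: "v \<notin> g ` {..j}"
      proof
        assume "v \<in> g ` {..j}"
        then obtain i where i: "i \<le> j" "v = u + real i * h" by (auto simp: g_def)
        have "v = u + real (Suc j) * h" unfolding h_def by simp
        with i have "real i * h = real (Suc j) * h" by simp
        then show False using hpos i by simp
      qed
      have T0g: "T0 = g ` {..j}" using Tg vng by (auto simp: T0_def)
      have wval: "w = u + real j * h"
        unfolding w_def T0g
      proof (rule Max_eqI)
        show "u + real j * h \<in> g ` {..j}" by (auto simp: g_def)
        fix z assume "z \<in> g ` {..j}"
        then obtain i where "i \<le> j" "z = g i" by auto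
        then show "z \<le> u + real j * h" using hpos by (auto simp: g_def intro!: mult_right_mono)
      qed simp
      have T0id: "T0 = id2 u w j"
        unfolding T0g id2_def g_def wval using J by (auto intro!: image_cong)
      have e1: "integral {u..w} (fS T0) = (w - u)^3 / (12 * (real j)\<^sup>2)" using IH T0id by simp
      have vw: "v - w = h" using wval unfolding h_def by (simp add: field_simps)
      have wu: "w - u = real j * h" using wval by simp
      have vu: "v - u = (real j + 1) * h" unfolding h_def by (simp add: field_simps)
      have L: "(w - u)^3 / (12 * (real j)\<^sup>2) + (v - w)^3 / 12 = (real j + 1) * h^3 / 12"
        unfolding wu vw using J by (simp add: field_simps power2_eq_square power3_eq_cube)
      have R: "(v - u)^3 / (12 * (real (Suc j))\<^sup>2) = (real j + 1) * h^3 / 12"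
      proof -
        have "(real j + 1) \<noteq> 0" using J by simp
        then show ?thesis unfolding vu RS by (rule cube_aux)
      qed
      show "integral {u..v} (fS T) = (v - u)^3 / (12 * (real (Suc j))\<^sup>2)"
        unfolding I e1 L R ..
    qed
    ultimately show ?thesis by simp
  qed
qed



definition idL :: "real \<Rightarrow> real \<Rightarrow> nat \<Rightarrow> real set" where
  "idL u v k = (\<lambda>i. u + (2 * real i - 1) * (v - u) / (2 * real k - 1)) ` {1..k}"

definition idR :: "real \<Rightarrow> real \<Rightarrow> nat \<Rightarrow> real set" where
  "idR u v m = (\<lambda>i. u + 2 * (real i - 1) * (v - u) / (2 * real m - 1)) ` {1..m}"

lemma atLeast1_Suc_image: "{1..Suc K} = Suc ` {..K}"
proof
  show "Suc ` {..K} \<subseteq> {1..Suc K}" by auto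
  show "{1..Suc K} \<subseteq> Suc ` {..K}"
  proof
    fix i assume "i \<in> {1..Suc K}"
    then have "i = Suc (i - 1)" "i - 1 \<le> K" by auto
    then show "i \<in> Suc ` {..K}" by (metis atMost_iff imageI)
  qed
qed

lemma id2_idL:
  assumes "1 \<le> K"
  shows "id2 (u + (v - u) / (2 * real K + 1)) v K = idL u v (Suc K)"
proof -
  define x0 where "x0 = (v - u) / (2 * real K + 1)"
  have vu: "v - u = (2 * real K + 1) * x0" unfolding x0_def by (simp add: field_simps)
  have "id2 (u + x0) v K = (\<lambda>i. u + (2 * real i + 1) * x0) ` {..K}"
    unfolding id2_def
  proof (rule image_cong)
    fix i assume "i \<in> {..K}"
    have "v - (u + x0) = 2 * real K * x0" using vu by (simp add: algebra_simps)
    then show "u + x0 + real i * (v - (u + x0)) / real K = u + (2 * real i + 1) * x0"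
      using assms by (simp add: field_simps)
  qed simp
  also have "\<dots> = idL u v (Suc K)"
    unfolding idL_def atLeast1_Suc_image image_image
  proof (rule image_cong)
    fix i assume "i \<in> {..K}"
    show "u + (2 * real i + 1) * x0 = u + (2 * real (Suc i) - 1) * (v - u) / (2 * real (Suc K) - 1)"
      unfolding x0_def by (simp add: field_simps)
  qed simp
  finally show ?thesis unfolding x0_def .
qed

lemma id2_idR:
  assumes "1 \<le> K"
  shows "id2 u (u + 2 * real K * ((v - u) / (2 * real K + 1))) K = idR u v (Suc K)"
proof -
  define x0 where "x0 = (v - u) / (2 * real K + 1)"
  have "id2 u (u + 2 * real K * x0) K = (\<lambda>i. u + 2 * real i * x0) ` {..K}"
    unfolding id2_def
  proof (rule image_cong)
    fix i assume "i \<in> {..K}"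
    show "u + real i * (u + 2 * real K * x0 - u) / real K = u + 2 * real i * x0"
      using assms by (simp add: field_simps)
  qed simp
  also have "\<dots> = idR u v (Suc K)"
    unfolding idR_def atLeast1_Suc_image image_image
  proof (rule image_cong)
    fix i assume "i \<in> {..K}"
    show "u + 2 * real i * x0 = u + 2 * (real (Suc i) - 1) * (v - u) / (2 * real (Suc K) - 1)"
      unfolding x0_def by (simp add: field_simps)
  qed simp
  finally show ?thesis unfolding x0_def .
qed


lemma cube_aux3: "(A::real) \<noteq> 0 \<Longrightarrow> (A * h)^3 / (3 * A\<^sup>2) = A * h^3 / 3"
  by (simp add: field_simps power2_eq_square power3_eq_cube)

lemma left_sided:
  assumes "1 \<le> k" "finite T" "T \<subseteq> {u..v}" "v \<in> T" "card T = k" "u < v"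
  shows "integral {u..v} (fS T) \<ge> (v - u)^3 / (3 * (2 * real k - 1)\<^sup>2) \<and>
     (integral {u..v} (fS T) = (v - u)^3 / (3 * (2 * real k - 1)\<^sup>2) \<longleftrightarrow> T = idL u v k)"
proof (cases "k = 1")
  case True
  have "{v} \<subseteq> T" using assms by auto
  moreover have "card {v} = card T" using assms True by auto
  ultimately have T: "T = {v}" using assms by (metis card_subset_eq)
  have I: "integral {u..v} (fS T) = (v - u)^3 / 3"
  proof -
    have "integral {u..v} (fS T) = integral {u..v} (\<lambda>x. (x - v)\<^sup>2)"
      by (rule integral_cong) (simp add: T fS_def)
    also have "\<dots> = (v - u)^3 / 3" using assms
      by (simp add: int_sq) (simp add: power3_eq_cube algebra_simps)
    finally show ?thesis .
  qed
  have "idL u v k = {v}" using True by (simp add: idL_def)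
  then show ?thesis using I T True by simp
next
  case False
  define K where "K = k - 1"
  have K1: "1 \<le> K" and kK: "k = Suc K" using False assms(1) by (auto simp: K_def)
  have neT: "T \<noteq> {}" using assms by auto
  define t where "t = Min T"
  have tT: "t \<in> T" unfolding t_def using assms(2) neT by (rule Min_in)
  have ut: "u \<le> t" using tT assms by auto
  have Tsub: "T \<subseteq> {t..v}" using assms unfolding t_def by auto
  have tv: "t < v"
  proof (rule ccontr)
    assume "\<not> t < v"
    then have "T \<subseteq> {v}" using Tsub by auto
    then have "card T \<le> 1" by (metis card.empty card.insert empty_iff finite.intros(1) insert_subset card_mono finite_insert le_zero_eq One_nat_def subset_singletonD order_refl)
    then show False using assms(5) False assms(1) by simp
  qed
  have TL: "T \<inter> {..t} = {t}"
  proof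
    show "T \<inter> {..t} \<subseteq> {t}"
    proof
      fix z assume z: "z \<in> T \<inter> {..t}"
      then have "t \<le> z" unfolding t_def using assms(2) by simp
      then show "z \<in> {t}" using z by auto
    qed
  qed (use tT in auto)
  have I: "integral {u..v} (fS T) = (t - u)^3 / 3 + integral {t..v} (fS T)"
  proof -
    have "integral {u..v} (fS T) = integral {u..t} (fS T) + integral {t..v} (fS T)"
      by (rule int_split) (use assms ut tv neT in auto)
    also have "integral {u..t} (fS T) = integral {u..t} (\<lambda>x. (x - t)\<^sup>2)"
    proof (rule integral_cong)
      fix x assume "x \<in> {u..t}"
      then have "fS T x = fS (T \<inter> {..t}) x" using fS_left[of T t x] assms tT by auto
      then show "fS T x = (x - t)\<^sup>2" unfolding TL by (simp add: fS_def)
    qed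
    also have "\<dots> = (t - u)^3 / 3" using ut
      by (simp add: int_sq) (simp add: power3_eq_cube algebra_simps)
    finally show ?thesis .
  qed
  have TS: "integral {t..v} (fS T) \<ge> (v - t)^3 / (12 * (real K)\<^sup>2) \<and>
     (integral {t..v} (fS T) = (v - t)^3 / (12 * (real K)\<^sup>2) \<longleftrightarrow> T = id2 t v K)"
    by (rule two_sided) (use K1 assms Tsub tT tv kK in auto)
  define x where "x = t - u"
  define y where "y = v - t"
  have xy: "x \<ge> 0" "y > 0" "v - u = x + y" using ut tv by (auto simp: x_def y_def)
  have N: "2 * real K > 0" using K1 by simp
  note KI = key_ineq[OF N, of y x]
  have KI1: "(y + x)^3 / (2 * real K + 1)\<^sup>2 \<le> y^3 / (2 * real K)\<^sup>2 + x^3" using KI(1) xy by simp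
  have conv1: "(v - u)^3 / (3 * (2 * real k - 1)\<^sup>2) = ((y + x)^3 / (2 * real K + 1)\<^sup>2) / 3"
    using xy kK by (simp add: add.commute)
  have conv2: "(y^3 / (2 * real K)\<^sup>2 + x^3) / 3 = (t - u)^3 / 3 + (v - t)^3 / (12 * (real K)\<^sup>2)"
    unfolding x_def y_def by (simp add: field_simps power2_eq_square)
  have TS1: "integral {t..v} (fS T) \<ge> (v - t)^3 / (12 * (real K)\<^sup>2)" using TS by simp
  have KI1': "((y + x)^3 / (2 * real K + 1)\<^sup>2) / 3 \<le> (y^3 / (2 * real K)\<^sup>2 + x^3) / 3"
    using KI1 by (simp add: divide_right_mono)
  have ge: "integral {u..v} (fS T) \<ge> (v - u)^3 / (3 * (2 * real k - 1)\<^sup>2)"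
    using I conv1 conv2 TS1 KI1' by linarith
  moreover have "integral {u..v} (fS T) = (v - u)^3 / (3 * (2 * real k - 1)\<^sup>2) \<longleftrightarrow> T = idL u v k"
  proof
    assume eq: "integral {u..v} (fS T) = (v - u)^3 / (3 * (2 * real k - 1)\<^sup>2)"
    have e1: "integral {t..v} (fS T) = (v - t)^3 / (12 * (real K)\<^sup>2)"
      using eq I conv1 conv2 TS1 KI1' by linarith
    have e2': "((y + x)^3 / (2 * real K + 1)\<^sup>2) / 3 = (y^3 / (2 * real K)\<^sup>2 + x^3) / 3"
      using eq I conv1 conv2 TS1 KI1' by linarith
    have "y = 2 * real K * x" using KI(2) xy e2' by simp
    then have tval: "t = u + (v - u) / (2 * real K + 1)"
      using xy unfolding x_def y_def by (simp add: field_simps)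
    have "T = id2 t v K" using TS e1 by simp
    then show "T = idL u v k" unfolding tval kK using id2_idL[OF K1] by simp
  next
    assume Tid: "T = idL u v k"
    define x0 where "x0 = (v - u) / (2 * real K + 1)"
    have x0p: "x0 > 0" using assms unfolding x0_def by simp
    have Tid2: "T = id2 (u + x0) v K" unfolding Tid kK x0_def using id2_idL[OF K1] by simp
    have tval: "t = u + x0" unfolding t_def Tid2
    proof (rule Min_eqI)
      show "finite (id2 (u + x0) v K)" by (simp add: id2_def)
      show "u + x0 \<in> id2 (u + x0) v K" by (auto simp: id2_def image_iff intro!: bexI[of _ 0])
      fix z assume "z \<in> id2 (u + x0) v K"
      then obtain i where "z = u + x0 + real i * (v - (u + x0)) / real K" by (auto simp: id2_def)
      moreover have "v - (u + x0) \<ge> 0"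
      proof -
        have "v - (u + x0) = 2 * real K * x0" unfolding x0_def by (simp add: field_simps)
        then show ?thesis using x0p by simp
      qed
      ultimately show "u + x0 \<le> z" by simp
    qed
    have e1: "integral {t..v} (fS T) = (v - t)^3 / (12 * (real K)\<^sup>2)"
      using TS Tid2 tval by simp
    have vt: "v - t = 2 * real K * x0" unfolding tval x0_def by (simp add: field_simps)
    have vu: "v - u = (2 * real K + 1) * x0" unfolding x0_def by (simp add: field_simps)
    have L: "(t - u)^3 / 3 + (v - t)^3 / (12 * (real K)\<^sup>2) = (2 * real K + 1) * x0^3 / 3"
      unfolding vt using K1 tval by (simp add: field_simps power2_eq_square power3_eq_cube)
    have R: "(v - u)^3 / (3 * (2 * real k - 1)\<^sup>2) = (2 * real K + 1) * x0^3 / 3"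
    proof -
      have kk: "2 * real k - 1 = 2 * real K + 1" using kK by simp
      show ?thesis unfolding vu kk by (rule cube_aux3) simp
    qed
    show "integral {u..v} (fS T) = (v - u)^3 / (3 * (2 * real k - 1)\<^sup>2)"
      unfolding I e1 L R ..
  qed
  ultimately show ?thesis by simp
qed


lemma right_sided:
  assumes "1 \<le> m" "finite T" "T \<subseteq> {u..v}" "u \<in> T" "card T = m" "u < v"
  shows "integral {u..v} (fS T) \<ge> (v - u)^3 / (3 * (2 * real m - 1)\<^sup>2) \<and>
     (integral {u..v} (fS T) = (v - u)^3 / (3 * (2 * real m - 1)\<^sup>2) \<longleftrightarrow> T = idR u v m)"
proof (cases "m = 1")
  case True
  have "{u} \<subseteq> T" using assms by auto
  moreover have "card {u} = card T" using assms True by auto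
  ultimately have T: "T = {u}" using assms by (metis card_subset_eq)
  have I: "integral {u..v} (fS T) = (v - u)^3 / 3"
  proof -
    have "integral {u..v} (fS T) = integral {u..v} (\<lambda>x. (x - u)\<^sup>2)"
      by (rule integral_cong) (simp add: T fS_def)
    also have "\<dots> = (v - u)^3 / 3" using assms
      by (simp add: int_sq)
    finally show ?thesis .
  qed
  have "idR u v m = {u}" using True by (simp add: idR_def)
  then show ?thesis using I T True by simp
next
  case False
  define K where "K = m - 1"
  have K1: "1 \<le> K" and kK: "m = Suc K" using False assms(1) by (auto simp: K_def)
  have neT: "T \<noteq> {}" using assms by auto
  define t where "t = Max T"
  have tT: "t \<in> T" unfolding t_def using assms(2) neT by (rule Max_in)
  have tv: "t \<le> v" using tT assms by auto
  have Tsub: "T \<subseteq> {u..t}" using assms unfolding t_def by auto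
  have ut: "u < t"
  proof (rule ccontr)
    assume "\<not> u < t"
    then have "T \<subseteq> {u}" using Tsub by auto
    then have "card T \<le> 1" by (metis card.empty card.insert empty_iff finite.intros(1) insert_subset card_mono finite_insert le_zero_eq One_nat_def subset_singletonD order_refl)
    then show False using assms(5) False assms(1) by simp
  qed
  have TR: "T \<inter> {t..} = {t}"
  proof
    show "T \<inter> {t..} \<subseteq> {t}"
    proof
      fix z assume z: "z \<in> T \<inter> {t..}"
      then have "z \<le> t" unfolding t_def using assms(2) by simp
      then show "z \<in> {t}" using z by auto
    qed
  qed (use tT in auto)
  have I: "integral {u..v} (fS T) = integral {u..t} (fS T) + (v - t)^3 / 3"
  proof -
    have "integral {u..v} (fS T) = integral {u..t} (fS T) + integral {t..v} (fS T)"
      by (rule int_split) (use assms ut tv neT in auto)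
    also have "integral {t..v} (fS T) = integral {t..v} (\<lambda>x. (x - t)\<^sup>2)"
    proof (rule integral_cong)
      fix x assume "x \<in> {t..v}"
      then have "fS T x = fS (T \<inter> {t..}) x" using fS_right[of T t x] assms tT by auto
      then show "fS T x = (x - t)\<^sup>2" unfolding TR by (simp add: fS_def)
    qed
    also have "\<dots> = (v - t)^3 / 3" using tv
      by (simp add: int_sq)
    finally show ?thesis .
  qed
  have TS: "integral {u..t} (fS T) \<ge> (t - u)^3 / (12 * (real K)\<^sup>2) \<and>
     (integral {u..t} (fS T) = (t - u)^3 / (12 * (real K)\<^sup>2) \<longleftrightarrow> T = id2 u t K)"
    by (rule two_sided) (use K1 assms Tsub tT ut kK in auto)
  define x where "x = v - t"
  define y where "y = t - u"
  have xy: "x \<ge> 0" "y > 0" "v - u = x + y" using ut tv by (auto simp: x_def y_def)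
  have N: "2 * real K > 0" using K1 by simp
  note KI = key_ineq[OF N, of y x]
  have KI1: "(y + x)^3 / (2 * real K + 1)\<^sup>2 \<le> y^3 / (2 * real K)\<^sup>2 + x^3" using KI(1) xy by simp
  have conv1: "(v - u)^3 / (3 * (2 * real m - 1)\<^sup>2) = ((y + x)^3 / (2 * real K + 1)\<^sup>2) / 3"
    using xy kK by (simp add: add.commute)
  have conv2: "(y^3 / (2 * real K)\<^sup>2 + x^3) / 3 = (t - u)^3 / (12 * (real K)\<^sup>2) + (v - t)^3 / 3"
    unfolding x_def y_def by (simp add: field_simps power2_eq_square)
  have TS1: "integral {u..t} (fS T) \<ge> (t - u)^3 / (12 * (real K)\<^sup>2)" using TS by simp
  have KI1': "((y + x)^3 / (2 * real K + 1)\<^sup>2) / 3 \<le> (y^3 / (2 * real K)\<^sup>2 + x^3) / 3"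
    using KI1 by (simp add: divide_right_mono)
  have ge: "integral {u..v} (fS T) \<ge> (v - u)^3 / (3 * (2 * real m - 1)\<^sup>2)"
    using I conv1 conv2 TS1 KI1' by linarith
  moreover have "integral {u..v} (fS T) = (v - u)^3 / (3 * (2 * real m - 1)\<^sup>2) \<longleftrightarrow> T = idR u v m"
  proof
    assume eq: "integral {u..v} (fS T) = (v - u)^3 / (3 * (2 * real m - 1)\<^sup>2)"
    have e1: "integral {u..t} (fS T) = (t - u)^3 / (12 * (real K)\<^sup>2)"
      using eq I conv1 conv2 TS1 KI1' by linarith
    have e2': "((y + x)^3 / (2 * real K + 1)\<^sup>2) / 3 = (y^3 / (2 * real K)\<^sup>2 + x^3) / 3"
      using eq I conv1 conv2 TS1 KI1' by linarith
    have "y = 2 * real K * x" using KI(2) xy e2' by simp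
    then have tval: "t = u + 2 * real K * ((v - u) / (2 * real K + 1))"
      using xy unfolding x_def y_def by (simp add: field_simps)
    have "T = id2 u t K" using TS e1 by simp
    then show "T = idR u v m" unfolding tval kK using id2_idR[OF K1] by simp
  next
    assume Tid: "T = idR u v m"
    define x0 where "x0 = (v - u) / (2 * real K + 1)"
    have x0p: "x0 > 0" using assms unfolding x0_def by simp
    have Tid2: "T = id2 u (u + 2 * real K * x0) K" unfolding Tid kK x0_def using id2_idR[OF K1] by simp
    have tval: "t = u + 2 * real K * x0" unfolding t_def Tid2
    proof (rule Max_eqI)
      show "finite (id2 u (u + 2 * real K * x0) K)" by (simp add: id2_def)
      show "u + 2 * real K * x0 \<in> id2 u (u + 2 * real K * x0) K"
        using K1 by (auto simp: id2_def image_iff intro!: bexI[of _ K])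
      fix z assume "z \<in> id2 u (u + 2 * real K * x0) K"
      then obtain i where i: "i \<le> K" "z = u + real i * (2 * real K * x0) / real K" by (auto simp: id2_def)
      have "real i * (2 * real K * x0) / real K = real i * (2 * x0)" using K1 by simp
      also have "\<dots> \<le> real K * (2 * x0)" using i x0p by (intro mult_right_mono) auto
      finally show "z \<le> u + 2 * real K * x0" using i by simp
    qed
    have e1: "integral {u..t} (fS T) = (t - u)^3 / (12 * (real K)\<^sup>2)"
      using TS Tid2 tval by simp
    have vt: "v - t = x0" unfolding tval x0_def by (simp add: field_simps)
    have tu: "t - u = 2 * real K * x0" unfolding tval by simp
    have vu: "v - u = (2 * real K + 1) * x0" unfolding x0_def by (simp add: field_simps)
    have L: "(t - u)^3 / (12 * (real K)\<^sup>2) + (v - t)^3 / 3 = (2 * real K + 1) * x0^3 / 3"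
      unfolding vt tu using K1 by (simp add: field_simps power2_eq_square power3_eq_cube)
    have R: "(v - u)^3 / (3 * (2 * real m - 1)\<^sup>2) = (2 * real K + 1) * x0^3 / 3"
    proof -
      have kk: "2 * real m - 1 = 2 * real K + 1" using kK by simp
      show ?thesis unfolding vu kk by (rule cube_aux3) simp
    qed
    show "integral {u..v} (fS T) = (v - u)^3 / (3 * (2 * real m - 1)\<^sup>2)"
      unfolding I e1 L R ..
  qed
  ultimately show ?thesis by simp
qed



lemma unif_eq:
  assumes "a < (b::real)"
  shows "uniform_interval a b = density lborel (\<lambda>x. ennreal (indicator {a..b} x / (b-a)))"
  unfolding uniform_interval_def uniform_measure_def
proof (rule density_cong)
  show "(\<lambda>x. indicator {a..b} x / emeasure lborel {a..b}) \<in> borel_measurable lborel" by simp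
  show "(\<lambda>x. ennreal (indicator {a..b} x / (b - a))) \<in> borel_measurable lborel" by simp
  show "AE x in lborel. indicator {a..b} x / emeasure lborel {a..b} = ennreal (indicator {a..b} x / (b - a))"
  proof -
    have "1 / ennreal (b - a) = ennreal (1 / (b - a))"
      using divide_ennreal[of 1 "b-a"] assms by simp
    then show ?thesis by (auto simp: indicator_def)
  qed
qed

lemma unif_integral:
  assumes "a < (b::real)" and f: "continuous_on UNIV f"
  shows "integral\<^sup>L (uniform_interval a b) f = integral {a..b} f / (b - a)"
proof -
  have fm: "f \<in> borel_measurable lborel" using f by (simp add: borel_measurable_continuous_onI)
  have "integral\<^sup>L (uniform_interval a b) f = integral\<^sup>L lborel (\<lambda>x. (indicator {a..b} x / (b-a)) *\<^sub>R f x)"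
    unfolding unif_eq[OF assms(1)] using assms fm
    by (subst integral_density) auto
  also have "\<dots> = (LINT x : {a..b} | lborel. f x) / (b - a)"
    unfolding set_lebesgue_integral_def
    by (simp add: indicator_def if_distrib) 
  also have "(LINT x : {a..b} | lborel. f x) = integral {a..b} f"
    apply (rule set_borel_integral_eq_integral)
    apply (rule borel_integrable_atLeastAtMost')
    using f continuous_on_subset by blast
  finally show ?thesis .
qed

lemma dist_eq:
  assumes "a < b" "finite \<alpha>" "finite \<beta>" "\<beta> \<noteq> {}"
  shows "cond_distortion (uniform_interval a b) \<beta> \<alpha> = integral {a..b} (fS (\<alpha> \<union> \<beta>)) / (b - a)"
proof -
  have "cond_distortion (uniform_interval a b) \<beta> \<alpha> = integral\<^sup>L (uniform_interval a b) (fS (\<alpha> \<union> \<beta>))"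
    unfolding cond_distortion_def fS_def by simp
  also have "\<dots> = integral {a..b} (fS (\<alpha> \<union> \<beta>)) / (b - a)"
    by (rule unif_integral) (use assms in \<open>auto intro!: fS_cont\<close>)
  finally show ?thesis .
qed

lemma int_nonneg:
  assumes "finite S" "S \<noteq> {}" "u \<le> v"
  shows "integral {u..v} (fS S) \<ge> 0"
  by (rule integral_nonneg) (use assms in \<open>auto intro!: integrable_continuous_interval fS_cont fS_nonneg\<close>)

lemma split3:
  assumes "finite S" "c \<in> S" "d \<in> S" "a < c" "c < d" "d < b" "S \<subseteq> {a..b}"
  shows "integral {a..b} (fS S) = integral {a..c} (fS (S \<inter> {a..c})) + integral {c..d} (fS (S \<inter> {c..d}))
     + integral {d..b} (fS (S \<inter> {d..b}))"
proof -
  have ne: "S \<noteq> {}" using assms by auto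
  have "integral {a..b} (fS S) = integral {a..c} (fS S) + integral {c..b} (fS S)"
    by (rule int_split) (use assms ne in auto)
  also have "integral {c..b} (fS S) = integral {c..d} (fS S) + integral {d..b} (fS S)"
    by (rule int_split) (use assms ne in auto)
  also have "integral {a..c} (fS S) = integral {a..c} (fS (S \<inter> {a..c}))"
  proof (rule integral_cong)
    fix x assume x: "x \<in> {a..c}"
    have "S \<inter> {..c} = S \<inter> {a..c}" using assms by auto
    then show "fS S x = fS (S \<inter> {a..c}) x" using fS_left[of S c x] assms x by auto
  qed
  also have "integral {c..d} (fS S) = integral {c..d} (fS (S \<inter> {c..d}))"
  proof (rule integral_cong)
    fix x assume x: "x \<in> {c..d}"
    have "fS S x = fS (S \<inter> {c..}) x" using fS_right[of S c x] assms x by auto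
    also have "\<dots> = fS (S \<inter> {c..} \<inter> {..d}) x" using fS_left[of "S \<inter> {c..}" d x] assms x by auto
    also have "S \<inter> {c..} \<inter> {..d} = S \<inter> {c..d}" by auto
    finally show "fS S x = fS (S \<inter> {c..d}) x" .
  qed
  also have "integral {d..b} (fS S) = integral {d..b} (fS (S \<inter> {d..b}))"
  proof (rule integral_cong)
    fix x assume x: "x \<in> {d..b}"
    have "S \<inter> {d..} = S \<inter> {d..b}" using assms by auto
    then show "fS S x = fS (S \<inter> {d..b}) x" using fS_right[of S d x] assms x by auto
  qed
  finally show ?thesis by simp
qed

lemma idL_facts:
  assumes "u < v" "1 \<le> k"
  shows "idL u v k \<subseteq> {u..v}" "v \<in> idL u v k" "finite (idL u v k)" "card (idL u v k) = k"
proof -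
  have D: "2 * real k - 1 > 0" using assms by simp
  show "idL u v k \<subseteq> {u..v}"
  proof
    fix z assume "z \<in> idL u v k"
    then obtain i where i: "1 \<le> i" "i \<le> k" "z = u + (2 * real i - 1) * (v - u) / (2 * real k - 1)"
      by (auto simp: idL_def)
    have "(2 * real i - 1) * (v - u) / (2 * real k - 1) \<ge> 0" using i assms D by simp
    moreover have "(2 * real i - 1) * (v - u) / (2 * real k - 1) \<le> v - u"
      using i assms D by (simp add: divide_le_eq mult_right_mono)
    ultimately show "z \<in> {u..v}" using i by simp
  qed
  show "v \<in> idL u v k" unfolding idL_def using assms D
    by (auto simp: image_iff intro!: bexI[of _ k])
  show "finite (idL u v k)" by (simp add: idL_def)
  have "inj_on (\<lambda>i. u + (2 * real i - 1) * (v - u) / (2 * real k - 1)) {1..k}"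
    using assms D by (auto simp: inj_on_def)
  then show "card (idL u v k) = k" unfolding idL_def by (simp add: card_image)
qed

lemma idR_facts:
  assumes "u < v" "1 \<le> m"
  shows "idR u v m \<subseteq> {u..v}" "u \<in> idR u v m" "finite (idR u v m)" "card (idR u v m) = m"
proof -
  have D: "2 * real m - 1 > 0" using assms by simp
  show "idR u v m \<subseteq> {u..v}"
  proof
    fix z assume "z \<in> idR u v m"
    then obtain i where i: "1 \<le> i" "i \<le> m" "z = u + 2 * (real i - 1) * (v - u) / (2 * real m - 1)"
      by (auto simp: idR_def)
    have "2 * (real i - 1) * (v - u) / (2 * real m - 1) \<ge> 0" using i assms D by simp
    moreover have "2 * (real i - 1) * (v - u) / (2 * real m - 1) \<le> v - u"
      using i assms D by (simp add: divide_le_eq mult_right_mono)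
    ultimately show "z \<in> {u..v}" using i by simp
  qed
  show "u \<in> idR u v m" unfolding idR_def using assms D
    by (auto simp: image_iff intro!: bexI[of _ 1])
  show "finite (idR u v m)" by (simp add: idR_def)
  have "inj_on (\<lambda>i. u + 2 * (real i - 1) * (v - u) / (2 * real m - 1)) {1..m}"
    using assms D by (auto simp: inj_on_def)
  then show "card (idR u v m) = m" unfolding idR_def by (simp add: card_image)
qed

lemma id2_facts:
  assumes "u < v" "1 \<le> j"
  shows "id2 u v j \<subseteq> {u..v}" "u \<in> id2 u v j" "v \<in> id2 u v j" "finite (id2 u v j)" "card (id2 u v j) = Suc j"
proof -
  have D: "real j > 0" using assms by simp
  show "id2 u v j \<subseteq> {u..v}"
  proof
    fix z assume "z \<in> id2 u v j"
    then obtain i where i: "i \<le> j" "z = u + real i * (v - u) / real j"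
      by (auto simp: id2_def)
    have "real i * (v - u) / real j \<ge> 0" using i assms D by simp
    moreover have "real i * (v - u) / real j \<le> v - u"
      using i assms D by (simp add: divide_le_eq mult_right_mono)
    ultimately show "z \<in> {u..v}" using i by simp
  qed
  show "u \<in> id2 u v j" unfolding id2_def using assms D
    by (auto simp: image_iff intro!: bexI[of _ 0])
  show "v \<in> id2 u v j" unfolding id2_def using assms D
    by (auto simp: image_iff intro!: bexI[of _ j])
  show "finite (id2 u v j)" by (simp add: id2_def)
  have "inj_on (\<lambda>i. u + real i * (v - u) / real j) {..j}"
    using assms D by (auto simp: inj_on_def)
  then show "card (id2 u v j) = Suc j" unfolding id2_def by (simp add: card_image)
qed

lemma clamp_le:
  assumes "finite G" "G \<noteq> {}" "x \<in> {a..b}"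
  shows "fS ((\<lambda>p. max a (min b p)) ` G) x \<le> fS G x"
proof -
  have "Min ((\<lambda>p. (x - p)\<^sup>2) ` G) \<in> (\<lambda>p. (x - p)\<^sup>2) ` G"
    by (rule Min_in) (use assms in auto)
  then obtain p where p: "p \<in> G" "fS G x = (x - p)\<^sup>2"
    unfolding fS_def by auto
  have "fS ((\<lambda>p. max a (min b p)) ` G) x \<le> (x - max a (min b p))\<^sup>2"
    unfolding fS_def using assms p by (intro Min_le) auto
  also have "\<dots> \<le> (x - p)\<^sup>2" using assms
    by (subst abs_le_square_iff[symmetric]) (auto simp: max_def min_def)
  finally show ?thesis using p by simp
qed



lemma term_mono:
  fixes X :: real and k k' :: nat
  assumes "X > 0" "1 \<le> k" "k \<le> k'"
  shows "X / (3 * (2 * real k' - 1)\<^sup>2) \<le> X / (3 * (2 * real k - 1)\<^sup>2)"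
    and "X / (3 * (2 * real k' - 1)\<^sup>2) = X / (3 * (2 * real k - 1)\<^sup>2) \<Longrightarrow> k' = k"
proof -
  have p: "0 < 3 * (2 * real k - 1)\<^sup>2" using assms by simp
  have q: "3 * (2 * real k - 1)\<^sup>2 \<le> 3 * (2 * real k' - 1)\<^sup>2" using assms by (simp add: power_mono)
  show "X / (3 * (2 * real k' - 1)\<^sup>2) \<le> X / (3 * (2 * real k - 1)\<^sup>2)"
    using p q assms by (intro divide_left_mono) auto
  assume "X / (3 * (2 * real k' - 1)\<^sup>2) = X / (3 * (2 * real k - 1)\<^sup>2)"
  then have "(2 * real k' - 1)\<^sup>2 = (2 * real k - 1)\<^sup>2" using assms p q by (simp add: field_simps)
  then have "2 * real k' - 1 = 2 * real k - 1" using assms by (subst (asm) power2_eq_iff_nonneg) auto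
  then show "k' = k" by simp
qed

lemma term_mono2:
  fixes X :: real and l l' :: nat
  assumes "X > 0" "1 \<le> l" "l \<le> l'"
  shows "X / (12 * (real l')\<^sup>2) \<le> X / (12 * (real l)\<^sup>2)"
    and "X / (12 * (real l')\<^sup>2) = X / (12 * (real l)\<^sup>2) \<Longrightarrow> l' = l"
proof -
  have p: "0 < 12 * (real l)\<^sup>2" using assms by simp
  have q: "12 * (real l)\<^sup>2 \<le> 12 * (real l')\<^sup>2" using assms by (simp add: power_mono)
  show "X / (12 * (real l')\<^sup>2) \<le> X / (12 * (real l)\<^sup>2)"
    using p q assms by (intro divide_left_mono) auto
  assume "X / (12 * (real l')\<^sup>2) = X / (12 * (real l)\<^sup>2)"
  then have "(real l')\<^sup>2 = (real l)\<^sup>2" using assms p q by (simp add: field_simps)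
  then show "l' = l" by simp
qed

lemma count3:
  fixes a b c d :: real
  assumes "finite G" "c \<in> G" "d \<in> G" "a < c" "c < d" "d < b"
  shows "card (G \<inter> {a..c}) + card (G \<inter> {c..d}) + card (G \<inter> {d..b}) \<le> card G + 2"
proof -
  define A where "A = G \<inter> {a..c}"
  define B where "B = G \<inter> {c..d}"
  define C where "C = G \<inter> {d..b}"
  have fABC: "finite A" "finite B" "finite C" using assms by (simp_all add: A_def B_def C_def)
  have AB: "A \<inter> B = {c}" using assms by (auto simp: A_def B_def)
  have ABC: "(A \<union> B) \<inter> C = {d}" using assms by (auto simp: A_def B_def C_def)
  have "card A + card B = card (A \<union> B) + 1" using card_Un_Int[OF fABC(1,2)] AB by simp
  moreover have "card (A \<union> B) + card C = card (A \<union> B \<union> C) + 1"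
    using card_Un_Int[of "A \<union> B" C] fABC ABC by simp
  moreover have "card (A \<union> B \<union> C) \<le> card G"
    by (rule card_mono[OF assms(1)]) (auto simp: A_def B_def C_def)
  ultimately show ?thesis unfolding A_def B_def C_def by simp
qed

lemma idL_not_left:
  assumes "u < v" "1 \<le> k"
  shows "u \<notin> idL u v k"
proof
  assume "u \<in> idL u v k"
  then obtain i where i: "1 \<le> i" "u = u + (2 * real i - 1) * (v - u) / (2 * real k - 1)"
    by (auto simp: idL_def)
  have "(2 * real i - 1) * (v - u) / (2 * real k - 1) > 0" using i(1) assms by simp
  then show False using i(2) by simp
qed

lemma idR_not_right:
  assumes "u < v" "1 \<le> m"
  shows "v \<notin> idR u v m"
proof
  assume "v \<in> idR u v m"
  then obtain i where i: "i \<le> m" "v = u + 2 * (real i - 1) * (v - u) / (2 * real m - 1)"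
    by (auto simp: idR_def)
  have D: "2 * real m - 1 > 0" using assms by simp
  have "2 * (real i - 1) < 2 * real m - 1" using i(1) by simp
  then have "2 * (real i - 1) * (v - u) < (2 * real m - 1) * (v - u)" using assms by simp
  then have "2 * (real i - 1) * (v - u) / (2 * real m - 1) < v - u" using D by (simp add: divide_less_eq mult.commute)
  then show False using i(2) by simp
qed

lemma final_alg:
  fixes X Y Z P Q R W :: real
  shows "(X / (3 * P) + Y / (12 * Q) + Z / (3 * R)) / W = 1 / (3 * W) * (X / P + 1 / 4 * Y / Q + Z / R)"
  by (cases "P = 0"; cases "Q = 0"; cases "R = 0"; cases "W = 0"; simp add: field_simps)

theorem proposition2p1:
  fixes a b c d :: real and n k l m :: nat and \<alpha>n :: "real set"
  assumes "a < c" and "c < d" and "d < b" and "n \<ge> 2"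
    and "cond_optimal_set (uniform_interval a b) {c, d} n \<alpha>n"
    and "card (\<alpha>n \<inter> {a..c}) = k" and "card (\<alpha>n \<inter> {c..d}) = l"
    and "card (\<alpha>n \<inter> {d..b}) = m"
    and "k \<ge> 1" and "m \<ge> 1" and "l \<ge> 2"
  shows "k + l + m = n + 2
    \<and> \<alpha>n \<inter> {a..c} = {a + (2 * real j - 1) * (c - a) / (2 * real k - 1) | j. 1 \<le> j \<and> j \<le> k}
    \<and> \<alpha>n \<inter> {c..d} = {c + (real j - 1) / (real l - 1) * (d - c) | j. 1 \<le> j \<and> j \<le> l}
    \<and> \<alpha>n \<inter> {d..b} = {d + 2 * (real j - 1) * (b - d) / (2 * real m - 1) | j. 1 \<le> j \<and> j \<le> m}
    \<and> cond_qerror (uniform_interval a b) {c, d} n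
        = 1 / (3 * (b - a)) * ((c - a) ^ 3 / (2 * real k - 1)\<^sup>2
            + 1 / 4 * (d - c) ^ 3 / (real l - 1)\<^sup>2
            + (b - d) ^ 3 / (2 * real m - 1)\<^sup>2)"
proof -
  note ac = assms(1) and cd = assms(2) and db = assms(3)
  have ab: "a < b" using ac cd db by simp
  define P where "P = uniform_interval a b"
  define V where "V = cond_qerror P {c, d} n"
  have cb: "card {c, d} = 2" using cd by simp
  obtain \<alpha> where \<alpha>: "finite \<alpha>" "card \<alpha> \<le> n - 2" "\<alpha>n = \<alpha> \<union> {c, d}"
      "cond_distortion P {c, d} \<alpha> = V"
    using assms(5) unfolding cond_optimal_set_def P_def V_def cb by auto
  define D where "D = (\<lambda>S. integral {a..b} (fS S))"
  have distS: "cond_distortion P {c, d} \<alpha>' = D (\<alpha>' \<union> {c, d}) / (b - a)" if "finite \<alpha>'" for \<alpha>'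
    unfolding P_def D_def using dist_eq[OF ab that] by simp
  have Vle: "V \<le> cond_distortion P {c, d} \<alpha>'" if "finite \<alpha>'" "card \<alpha>' \<le> n - 2" for \<alpha>'
  proof -
    have bdd: "bdd_below ((\<lambda>\<alpha>. cond_distortion P {c, d} \<alpha>) ` {\<alpha>. finite \<alpha> \<and> card \<alpha> \<le> n - card {c, d}})"
    proof (rule bdd_belowI2)
      fix x :: "real set" assume "x \<in> {\<alpha>. finite \<alpha> \<and> card \<alpha> \<le> n - card {c, d}}"
      then have "finite x" by simp
      then show "0 \<le> cond_distortion P {c, d} x" unfolding distS[OF \<open>finite x\<close>] D_def
        using ab int_nonneg[of "x \<union> {c, d}" a b] by simp
    qed
    show ?thesis unfolding V_def cond_qerror_def
      by (rule cINF_lower[OF bdd]) (use that cb in simp)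
  qed
  define tL where "tL = (\<lambda>k::nat. (c - a)^3 / (3 * (2 * real k - 1)\<^sup>2))"
  define tM where "tM = (\<lambda>l::nat. (d - c)^3 / (12 * (real (l - 1))\<^sup>2))"
  define tR where "tR = (\<lambda>m::nat. (b - d)^3 / (3 * (2 * real m - 1)\<^sup>2))"
  define Lf where "Lf = (\<lambda>k l m. tL k + tM l + tR m)"
  have achieve: "V \<le> Lf k0 l0 m0 / (b - a)"
    if h: "1 \<le> k0" "2 \<le> l0" "1 \<le> m0" "k0 + l0 + m0 \<le> n + 2" for k0 l0 m0
  proof -
    define SL where "SL = idL a c k0"
    define SM where "SM = id2 c d (l0 - 1)"
    define SR where "SR = idR d b m0"
    note FL = idL_facts[OF ac h(1), folded SL_def]
    have l01: "1 \<le> l0 - 1" using h by simp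
    note FM = id2_facts[OF cd l01, folded SM_def]
    note FR = idR_facts[OF db h(3), folded SR_def]
    define S where "S = SL \<union> SM \<union> SR"
    have fS_: "finite S" using FL FM FR by (simp add: S_def)
    have cS: "c \<in> S" "d \<in> S" using FL FM by (auto simp: S_def)
    have SLs: "\<And>x. x \<in> SL \<Longrightarrow> a \<le> x \<and> x \<le> c" using FL(1) by auto
    have SMs: "\<And>x. x \<in> SM \<Longrightarrow> c \<le> x \<and> x \<le> d" using FM(1) by auto
    have SRs: "\<And>x. x \<in> SR \<Longrightarrow> d \<le> x \<and> x \<le> b" using FR(1) by auto
    have Sab: "S \<subseteq> {a..b}"
    proof
      fix x assume "x \<in> S"
      then show "x \<in> {a..b}" unfolding S_def using SLs[of x] SMs[of x] SRs[of x] ac cd db by auto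
    qed
    have SA: "S \<inter> {a..c} = SL"
    proof (intro equalityI subsetI)
      fix x assume x: "x \<in> S \<inter> {a..c}"
      show "x \<in> SL"
      proof (cases "x \<in> SL")
        case False
        then have "x \<in> SM \<or> x \<in> SR" using x by (auto simp: S_def)
        then have "x = c" using x SMs[of x] SRs[of x] cd by auto
        then show ?thesis using FL(2) by simp
      qed
    next
      fix x assume "x \<in> SL" then show "x \<in> S \<inter> {a..c}" using SLs by (auto simp: S_def)
    qed
    have SB: "S \<inter> {c..d} = SM"
    proof (intro equalityI subsetI)
      fix x assume x: "x \<in> S \<inter> {c..d}"
      show "x \<in> SM"
      proof (cases "x \<in> SM")
        case False
        then have "x \<in> SL \<or> x \<in> SR" using x by (auto simp: S_def)
        then have "x = c \<or> x = d" using x SLs[of x] SRs[of x] cd by auto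
        then show ?thesis using FM(2,3) by auto
      qed
    next
      fix x assume "x \<in> SM" then show "x \<in> S \<inter> {c..d}" using SMs by (auto simp: S_def)
    qed
    have SC: "S \<inter> {d..b} = SR"
    proof (intro equalityI subsetI)
      fix x assume x: "x \<in> S \<inter> {d..b}"
      show "x \<in> SR"
      proof (cases "x \<in> SR")
        case False
        then have "x \<in> SL \<or> x \<in> SM" using x by (auto simp: S_def)
        then have "x = d" using x SLs[of x] SMs[of x] cd by auto
        then show ?thesis using FR(2) by simp
      qed
    next
      fix x assume "x \<in> SR" then show "x \<in> S \<inter> {d..b}" using SRs by (auto simp: S_def)
    qed
    define \<alpha>' where "\<alpha>' = S - {c, d}"
    have fa: "finite \<alpha>'" using fS_ by (simp add: \<alpha>'_def)
    have a'S: "\<alpha>' \<union> {c, d} = S" using cS by (auto simp: \<alpha>'_def)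
    have sub3: "\<alpha>' \<subseteq> (SL - {c}) \<union> (SM - {c, d}) \<union> (SR - {d})"
      unfolding \<alpha>'_def S_def by blast
    have fin3: "finite ((SL - {c}) \<union> (SM - {c, d}) \<union> (SR - {d}))" using FL FM FR by simp
    have "card \<alpha>' \<le> card ((SL - {c}) \<union> (SM - {c, d}) \<union> (SR - {d}))"
      by (rule card_mono[OF fin3 sub3])
    also have "\<dots> \<le> card ((SL - {c}) \<union> (SM - {c, d})) + card (SR - {d})" by (rule card_Un_le)
    also have "card ((SL - {c}) \<union> (SM - {c, d})) \<le> card (SL - {c}) + card (SM - {c, d})" by (rule card_Un_le)
    also have "card (SL - {c}) = k0 - 1" using FL by (simp add: card_Diff_singleton)
    also have "card (SM - {c, d}) = l0 - 2"
    proof -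
      have "card (SM - {c, d}) = card SM - card {c, d}" using FM by (intro card_Diff_subset) auto
      then show ?thesis using FM cb by simp
    qed
    also have "card (SR - {d}) = m0 - 1" using FR by (simp add: card_Diff_singleton)
    finally have ca: "card \<alpha>' \<le> n - 2" using h by simp
    have "V \<le> cond_distortion P {c, d} \<alpha>'" by (rule Vle[OF fa ca])
    also have "\<dots> = D S / (b - a)" using distS[OF fa] a'S by simp
    also have "D S = Lf k0 l0 m0"
    proof -
      have "D S = integral {a..c} (fS SL) + integral {c..d} (fS SM) + integral {d..b} (fS SR)"
        unfolding D_def using split3[OF fS_ cS ac cd db Sab] SA SB SC by simp
      also have "integral {a..c} (fS SL) = tL k0"
        using left_sided[OF h(1) FL(3) FL(1) FL(2) FL(4) ac] unfolding tL_def SL_def by simp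
      also have "integral {c..d} (fS SM) = tM l0"
      proof -
        have "card SM = Suc (l0 - 1)" using FM by simp
        then show ?thesis
          using two_sided[OF l01 FM(4) FM(1) FM(2) FM(3) _ cd] unfolding tM_def SM_def by simp
      qed
      also have "integral {d..b} (fS SR) = tR m0"
        using right_sided[OF h(3) FR(3) FR(1) FR(2) FR(4) db] unfolding tR_def SR_def by simp
      finally show ?thesis unfolding Lf_def by simp
    qed
    finally show ?thesis .
  qed
  define G where "G = \<alpha>n"
  have fG: "finite G" using \<alpha> by (simp add: G_def)
  have cG: "c \<in> G" "d \<in> G" using \<alpha> by (auto simp: G_def)
  have neG: "G \<noteq> {}" using cG by auto
  have cardG: "card G \<le> n"
  proof -
    have "card G \<le> card \<alpha> + card {c, d}" unfolding G_def \<alpha>(3) by (rule card_Un_le)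
    then show ?thesis using \<alpha>(2) cb assms(4) by simp
  qed
  define A where "A = G \<inter> {a..c}"
  define B where "B = G \<inter> {c..d}"
  define C where "C = G \<inter> {d..b}"
  have cA: "card A = k" "card B = l" "card C = m" using assms(6-8) by (simp_all add: A_def B_def C_def G_def)
  have fABC: "finite A" "finite B" "finite C" using fG by (simp_all add: A_def B_def C_def)
  have klm: "k + l + m \<le> n + 2"
    using count3[OF fG cG ac cd db] cA cardG unfolding A_def B_def C_def by simp
  define G' where "G' = (\<lambda>p. max a (min b p)) ` G"
  have fG': "finite G'" using fG by (simp add: G'_def)
  have G'ab: "G' \<subseteq> {a..b}" using ab by (auto simp: G'_def)
  have cG': "c \<in> G'" "d \<in> G'"
  proof -
    have "max a (min b c) = c" "max a (min b d) = d" using ac cd db by auto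
    then show "c \<in> G'" "d \<in> G'" unfolding G'_def using cG by (metis image_eqI)+
  qed
  have neG': "G' \<noteq> {}" using cG' by auto
  have cardG': "card G' \<le> n" using card_image_le[OF fG, of "\<lambda>p. max a (min b p)"] cardG
    by (simp add: G'_def)
  define A' where "A' = G' \<inter> {a..c}"
  define B' where "B' = G' \<inter> {c..d}"
  define C' where "C' = G' \<inter> {d..b}"
  have GG': "G \<inter> {a..b} \<subseteq> G'"
  proof
    fix x assume x: "x \<in> G \<inter> {a..b}"
    then have "x = max a (min b x)" by auto
    then show "x \<in> G'" unfolding G'_def using x by (metis IntD1 image_eqI)
  qed
  have G'G: "G' \<subseteq> G \<union> {a, b}"
  proof
    fix x assume "x \<in> G'"
    then obtain p where p: "p \<in> G" "x = max a (min b p)" by (auto simp: G'_def)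
    show "x \<in> G \<union> {a, b}"
    proof (cases "p \<in> {a..b}")
      case True
      then show ?thesis using p by auto
    next
      case False
      then have "x = a \<or> x = b" using p ab by (auto simp: max_def min_def)
      then show ?thesis by auto
    qed
  qed
  have sub: "A \<subseteq> A'" "B \<subseteq> B'" "C \<subseteq> C'"
    unfolding A_def A'_def B_def B'_def C_def C'_def using GG' ac cd db by auto
  have sub': "A' - {a} \<subseteq> A" "B' \<subseteq> B" "C' - {b} \<subseteq> C"
    unfolding A_def A'_def B_def B'_def C_def C'_def using G'G ac cd db by auto
  have fABC': "finite A'" "finite B'" "finite C'" using fG' by (simp_all add: A'_def B'_def C'_def)
  define k' where "k' = card A'"
  define l' where "l' = card B'"
  define m' where "m' = card C'"
  have kk': "k \<le> k'" "l \<le> l'" "m \<le> m'"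
    using card_mono[OF fABC'(1) sub(1)] card_mono[OF fABC'(2) sub(2)] card_mono[OF fABC'(3) sub(3)] cA
    by (simp_all add: k'_def l'_def m'_def)
  have klm': "k' + l' + m' \<le> n + 2"
    using count3[OF fG' cG' ac cd db] cardG' unfolding A'_def B'_def C'_def k'_def l'_def m'_def by simp
  have DG'G: "D G' \<le> D G" unfolding D_def
    by (rule integral_le) (use fG fG' neG neG' in \<open>auto intro!: integrable_continuous_interval fS_cont clamp_le simp: G'_def\<close>)
  have DG': "D G' = integral {a..c} (fS A') + integral {c..d} (fS B') + integral {d..b} (fS C')"
    unfolding D_def A'_def B'_def C'_def by (rule split3[OF fG' cG' ac cd db G'ab])
  have k'1: "1 \<le> k'" "1 \<le> l' - 1" "1 \<le> m'" "2 \<le> l'" using kk' assms(9-11) by auto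
  have LA: "integral {a..c} (fS A') \<ge> tL k' \<and> (integral {a..c} (fS A') = tL k' \<longleftrightarrow> A' = idL a c k')"
    unfolding tL_def by (rule left_sided[OF k'1(1) fABC'(1)]) (use cG' ac in \<open>auto simp: A'_def k'_def\<close>)
  have LB: "integral {c..d} (fS B') \<ge> tM l' \<and> (integral {c..d} (fS B') = tM l' \<longleftrightarrow> B' = id2 c d (l' - 1))"
    unfolding tM_def by (rule two_sided[OF k'1(2) fABC'(2)]) (use cG' cd k'1 in \<open>auto simp: B'_def l'_def\<close>)
  have LC: "integral {d..b} (fS C') \<ge> tR m' \<and> (integral {d..b} (fS C') = tR m' \<longleftrightarrow> C' = idR d b m')"
    unfolding tR_def by (rule right_sided[OF k'1(3) fABC'(3)]) (use cG' db in \<open>auto simp: C'_def m'_def\<close>)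
  have V_up: "V \<le> Lf k' l' m' / (b - a)" using achieve[OF k'1(1) k'1(4) k'1(3) klm'] .
  have DG_V: "D G = V * (b - a)"
  proof -
    have "D G / (b - a) = V" using \<alpha>(4) distS[OF \<alpha>(1)] \<alpha>(3) by (simp add: G_def)
    then show ?thesis using ab by (simp add: field_simps)
  qed
  have V_up': "V * (b - a) \<le> Lf k' l' m'" using V_up ab by (simp add: pos_le_divide_eq)
  have LA1: "integral {a..c} (fS A') \<ge> tL k'" using LA by simp
  have LB1: "integral {c..d} (fS B') \<ge> tM l'" using LB by simp
  have LC1: "integral {d..b} (fS C') \<ge> tR m'" using LC by simp
  have Lf_def': "Lf k' l' m' = tL k' + tM l' + tR m'" by (simp add: Lf_def)
  note facts = LA1 LB1 LC1 DG'G DG' DG_V V_up' Lf_def'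
  have eqA: "integral {a..c} (fS A') = tL k'" using facts by linarith
  have eqB: "integral {c..d} (fS B') = tM l'" using facts by linarith
  have eqC: "integral {d..b} (fS C') = tR m'" using facts by linarith
  have VL': "V * (b - a) = Lf k' l' m'" using facts by linarith
  have A'id: "A' = idL a c k'" using LA eqA by simp
  have B'id: "B' = id2 c d (l' - 1)" using LB eqB by simp
  have C'id: "C' = idR d b m'" using LC eqC by simp
  have "A' \<subseteq> A" using sub'(1) idL_not_left[OF ac k'1(1)] A'id by auto
  then have AA: "A = A'" using sub(1) by auto
  have BB: "B = B'" using sub(2) sub'(2) by auto
  have "C' \<subseteq> C" using sub'(3) idR_not_right[OF db k'1(3)] C'id by auto
  then have CC: "C = C'" using sub(3) by auto
  have keq: "k' = k" "l' = l" "m' = m" using AA BB CC cA by (simp_all add: k'_def l'_def m'_def)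
  have A_eq: "A = idL a c k" using AA A'id keq by simp
  have B_eq: "B = id2 c d (l - 1)" using BB B'id keq by simp
  have C_eq: "C = idR d b m" using CC C'id keq by simp
  have VL: "V * (b - a) = Lf k l m" using VL' keq by simp
  have nklm: "k + l + m = n + 2"
  proof (rule ccontr)
    assume "k + l + m \<noteq> n + 2"
    then have h: "Suc k + l + m \<le> n + 2" using klm by simp
    have "V \<le> Lf (Suc k) l m / (b - a)" using achieve[OF _ assms(11) assms(10) h] by simp
    then have "V * (b - a) \<le> Lf (Suc k) l m" using ab by (simp add: pos_le_divide_eq)
    moreover have "tL (Suc k) < tL k"
    proof -
      have X: "(c - a)^3 > 0" using ac by simp
      have "tL (Suc k) \<le> tL k" "tL (Suc k) \<noteq> tL k"
        using term_mono[OF X assms(9), of "Suc k"] unfolding tL_def by auto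
      then show ?thesis by simp
    qed
    ultimately show False using VL unfolding Lf_def by simp
  qed
  have SA: "\<alpha>n \<inter> {a..c} = {a + (2 * real j - 1) * (c - a) / (2 * real k - 1) | j. 1 \<le> j \<and> j \<le> k}"
    using A_eq unfolding A_def G_def idL_def by auto
  have SC: "\<alpha>n \<inter> {d..b} = {d + 2 * (real j - 1) * (b - d) / (2 * real m - 1) | j. 1 \<le> j \<and> j \<le> m}"
    using C_eq unfolding C_def G_def idR_def by auto
  have SB: "\<alpha>n \<inter> {c..d} = {c + (real j - 1) / (real l - 1) * (d - c) | j. 1 \<le> j \<and> j \<le> l}"
  proof -
    have rl: "real (l - 1) = real l - 1" using assms(11) by simp
    have "id2 c d (l - 1) = {c + (real j - 1) / (real l - 1) * (d - c) | j. 1 \<le> j \<and> j \<le> l}"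
    proof (intro equalityI subsetI)
      fix z assume "z \<in> id2 c d (l - 1)"
      then obtain i where i: "i \<le> l - 1" "z = c + real i * (d - c) / real (l - 1)" by (auto simp: id2_def)
      have "z = c + (real (Suc i) - 1) / (real l - 1) * (d - c)" using i(2) rl by simp
      moreover have "1 \<le> Suc i" "Suc i \<le> l" using i(1) assms(11) by auto
      ultimately show "z \<in> {c + (real j - 1) / (real l - 1) * (d - c) | j. 1 \<le> j \<and> j \<le> l}" by blast
    next
      fix z assume "z \<in> {c + (real j - 1) / (real l - 1) * (d - c) | j. 1 \<le> j \<and> j \<le> l}"
      then obtain j where j: "1 \<le> j" "j \<le> l" "z = c + (real j - 1) / (real l - 1) * (d - c)" by auto
      have "real (j - 1) = real j - 1" using j(1) by simp
      then have "z = c + real (j - 1) * (d - c) / real (l - 1)" using j(3) rl by simp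
      moreover have "j - 1 \<le> l - 1" using j by simp
      ultimately show "z \<in> id2 c d (l - 1)" unfolding id2_def by blast
    qed
    then show ?thesis using B_eq unfolding B_def G_def by simp
  qed
  have VV: "cond_qerror (uniform_interval a b) {c, d} n
        = 1 / (3 * (b - a)) * ((c - a) ^ 3 / (2 * real k - 1)\<^sup>2
            + 1 / 4 * (d - c) ^ 3 / (real l - 1)\<^sup>2
            + (b - d) ^ 3 / (2 * real m - 1)\<^sup>2)"
  proof -
    have rl: "real (l - 1) = real l - 1" using assms(11) by simp
    have "cond_qerror (uniform_interval a b) {c, d} n = Lf k l m / (b - a)"
      using VL ab unfolding V_def P_def by (simp add: field_simps)
    also have "\<dots> = 1 / (3 * (b - a)) * ((c - a) ^ 3 / (2 * real k - 1)\<^sup>2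
            + 1 / 4 * (d - c) ^ 3 / (real l - 1)\<^sup>2
            + (b - d) ^ 3 / (2 * real m - 1)\<^sup>2)"
      unfolding Lf_def tL_def tM_def tR_def rl by (rule final_alg)
    finally show ?thesis .
  qed
  show ?thesis using nklm SA SB SC VV by blast
qed

end
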